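(* Let $\ell\le d\le n/2$ and suppose $d$ is unknown to the algorithm. Any adaptive randomized group testing algorithm that, with probability at least $2/3$, detects $\ell$ defective items must make (in the worst case) at least $\ell\log(n/d)-1$ tests when the defective set has size $d$.
   Context: Group testing: items $X=[n]$, unknown defective set $I\subseteq X$ with $d=|I|$. A test $Q\subseteq X$ has answer $1$ if $Q\cap I\neq\emptyset$ and $0$ otherwise; the algorithm accesses $I$ only through tests, and in an adaptive algorithm tests may depend on previous answers. "Detects $\ell$ defective items" means it outputs $L\subseteq I$ with $|L|=\ell$. "$d$ is unknown" means the algorithm receives no information about $|I|$ and must succeed for every defective set $I$ with $|I|\ge \ell$. Logarithms are base 2. *)

theory Defs
  imports "HOL-Probability.Probability"
begin

text \<open>A deterministic adaptive group testing algorithm is a strategy: given the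
list of answers obtained so far, it either asks a test Q or stops and outputs a set L.\<close>

datatype action = Test "nat set" | Output "nat set"

type_synonym strategy = "bool list \<Rightarrow> action"

definition test_answer :: "nat set \<Rightarrow> nat set \<Rightarrow> bool" where
  "test_answer I Q \<longleftrightarrow> Q \<inter> I \<noteq> {}"

fun hist :: "strategy \<Rightarrow> nat set \<Rightarrow> nat \<Rightarrow> bool list" where
  "hist S I 0 = []"
| "hist S I (Suc k) =
     (case S (hist S I k) of
        Test Q \<Rightarrow> hist S I k @ [test_answer I Q]
      | Output L \<Rightarrow> hist S I k)"

definition is_output :: "action \<Rightarrow> bool" where
  "is_output a \<longleftrightarrow> (\<exists>L. a = Output L)"

definition halts :: "strategy \<Rightarrow> nat set \<Rightarrow> bool" where
  "halts S I \<longleftrightarrow> (\<exists>k. is_output (S (hist S I k)))"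

text \<open>Number of tests made before stopping (meaningful when the strategy halts).\<close>
definition num_tests :: "strategy \<Rightarrow> nat set \<Rightarrow> nat" where
  "num_tests S I = (LEAST k. is_output (S (hist S I k)))"

definition output_of :: "strategy \<Rightarrow> nat set \<Rightarrow> nat set" where
  "output_of S I = (case S (hist S I (num_tests S I)) of Output L \<Rightarrow> L | Test Q \<Rightarrow> {})"

definition detects :: "strategy \<Rightarrow> nat \<Rightarrow> nat set \<Rightarrow> bool" where
  "detects S l I \<longleftrightarrow> halts S I \<and> output_of S I \<subseteq> I \<and> card (output_of S I) = l"

text \<open>S makes at least q tests on I (a non-halting run makes infinitely many).\<close>
definition makes_at_least :: "strategy \<Rightarrow> nat set \<Rightarrow> real \<Rightarrow> bool" where
  "makes_at_least S I q \<longleftrightarrow> \<not> halts S I \<or> real (num_tests S I) \<ge> q"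

end

theory Submission
  imports Defs
begin

lemma hist_prefix:
  assumes "halts S I"
  shows "j \<le> num_tests S I \<Longrightarrow> length (hist S I j) = j \<and> (\<forall>i\<le>j. hist S I i = take i (hist S I j))"
proof (induction j)
  case 0 then show ?case by simp
next
  case (Suc j)
  have lt: "j < num_tests S I" using Suc.prems by simp
  have "\<not> is_output (S (hist S I j))"
    using not_less_Least[OF lt[unfolded num_tests_def]] by blast
  then obtain Q where Q: "S (hist S I j) = Test Q"
    by (cases "S (hist S I j)") (auto simp: is_output_def)
  have IH: "length (hist S I j) = j \<and> (\<forall>i\<le>j. hist S I i = take i (hist S I j))"
    using Suc.IH[OF less_imp_le[OF lt]] .
  have len: "length (hist S I j) = j" using IH by blast
  have h: "hist S I (Suc j) = hist S I j @ [test_answer I Q]" using Q by simp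
  show ?case
  proof (intro conjI allI impI)
    show "length (hist S I (Suc j)) = Suc j" using h len by simp
    fix i assume "i \<le> Suc j"
    then consider "i = Suc j" | "i \<le> j" by linarith
    then show "hist S I i = take i (hist S I (Suc j))"
    proof cases
      case 1 then show ?thesis using h len by simp
    next
      case 2
      have "hist S I i = take i (hist S I j)" using IH 2 by blast
      also have "\<dots> = take i (hist S I (Suc j))" using h len 2 by simp
      finally show ?thesis .
    qed
  qed
qed

lemma halts_output:
  assumes "halts S I"
  shows "is_output (S (hist S I (num_tests S I)))"
  using assms unfolding halts_def num_tests_def by (rule LeastI_ex)

definition outp :: "strategy \<Rightarrow> bool list \<Rightarrow> nat set" where
  "outp S h = (case S h of Output L \<Rightarrow> L | Test Q \<Rightarrow> {})"

definition pad :: "nat \<Rightarrow> bool list \<Rightarrow> bool list" where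
  "pad t h = h @ replicate (t - length h) False"

definition G :: "strategy \<Rightarrow> bool list \<Rightarrow> nat set" where
  "G S w = outp S (take (LEAST j. is_output (S (take j w))) w)"

lemma G_pad:
  assumes "halts S I" "num_tests S I \<le> t"
  shows "G S (pad t (hist S I (num_tests S I))) = output_of S I"
proof -
  let ?k = "num_tests S I"
  let ?w = "pad t (hist S I ?k)"
  have P: "length (hist S I ?k) = ?k \<and> (\<forall>i\<le>?k. hist S I i = take i (hist S I ?k))"
    using hist_prefix[OF assms(1) order_refl] .
  have tk: "take i ?w = hist S I i" if "i \<le> ?k" for i
  proof -
    have "hist S I i = take i (hist S I ?k)" using conjunct2[OF P, rule_format, OF that] .
    moreover have "length (hist S I ?k) = ?k" using conjunct1[OF P] .
    ultimately show ?thesis using that by (simp add: pad_def)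
  qed
  have "(LEAST j. is_output (S (take j ?w))) = ?k"
  proof (rule Least_equality)
    show "is_output (S (take ?k ?w))" using tk[of ?k] halts_output[OF assms(1)] by simp
  next
    fix y assume y: "is_output (S (take y ?w))"
    show "?k \<le> y"
    proof (rule ccontr)
      assume "\<not> ?k \<le> y"
      then have "y < ?k" by simp
      then have "\<not> is_output (S (hist S I y))"
        using not_less_Least[of y "\<lambda>k. is_output (S (hist S I k))"] unfolding num_tests_def by simp
      then show False using y tk[of y] \<open>y < ?k\<close> by simp
    qed
  qed
  then show ?thesis using tk[of ?k] by (simp add: G_def outp_def output_of_def)
qed


lemma count_containing:
  assumes "L \<subseteq> {1..n}" "card L = l" "l \<le> d"
  shows "card {I. I \<subseteq> {1..n} \<and> card I = d \<and> L \<subseteq> I} \<le> (n - l) choose (d - l)"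
proof -
  have fL: "finite L" using assms(1) finite_subset by blast
  let ?J = "{J. J \<subseteq> {1..n} - L \<and> card J = d - l}"
  have "{I. I \<subseteq> {1..n} \<and> card I = d \<and> L \<subseteq> I} \<subseteq> (\<lambda>J. J \<union> L) ` ?J"
  proof
    fix I assume I: "I \<in> {I. I \<subseteq> {1..n} \<and> card I = d \<and> L \<subseteq> I}"
    have fI: "finite I" using I finite_subset by blast
    have "I = (I - L) \<union> L" using I by blast
    moreover have "I - L \<in> ?J" using I fI fL assms by (auto simp: card_Diff_subset)
    ultimately show "I \<in> (\<lambda>J. J \<union> L) ` ?J" by blast
  qed
  then have "card {I. I \<subseteq> {1..n} \<and> card I = d \<and> L \<subseteq> I} \<le> card ((\<lambda>J. J \<union> L) ` ?J)"
    by (intro card_mono) auto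
  also have "\<dots> \<le> card ?J" by (rule card_image_le) auto
  also have "\<dots> = card ({1..n} - L) choose (d - l)" by (rule n_subsets) auto
  also have "card ({1..n} - L) = n - l" using assms fL by (simp add: card_Diff_subset)
  finally show ?thesis .
qed

lemma count_bound:
  assumes H: "\<And>I. I \<subseteq> {1..n} \<Longrightarrow> card I = d \<Longrightarrow> halts S I \<and> num_tests S I \<le> t"
    and "l \<le> d"
  shows "card {I. I \<subseteq> {1..n} \<and> card I = d \<and> detects S l I} \<le> 2^t * ((n - l) choose (d - l))"
proof -
  define W where "W = {w::bool list. set w \<subseteq> UNIV \<and> length w = t}"
  define B where "B w = {I. I \<subseteq> {1..n} \<and> card I = d \<and> G S w \<subseteq> I \<and> card (G S w) = l}" for w
  have fW: "finite W" unfolding W_def by (rule finite_lists_length_eq) simp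
  have cW: "card W = 2^t" unfolding W_def using card_lists_length_eq[of "UNIV::bool set" t] by simp
  have fB: "finite (B w)" for w
    by (rule finite_subset[of _ "Pow {1..n}"]) (auto simp: B_def)
  have sub: "{I. I \<subseteq> {1..n} \<and> card I = d \<and> detects S l I} \<subseteq> (\<Union>w\<in>W. B w)"
  proof
    fix I assume I: "I \<in> {I. I \<subseteq> {1..n} \<and> card I = d \<and> detects S l I}"
    then have h: "halts S I" "num_tests S I \<le> t" using H by auto
    let ?w = "pad t (hist S I (num_tests S I))"
    have "length (hist S I (num_tests S I)) = num_tests S I"
      using conjunct1[OF hist_prefix[OF h(1) order_refl]] .
    then have "?w \<in> W" using h by (simp add: W_def pad_def)
    moreover have "I \<in> B ?w" using I G_pad[OF h] by (simp add: B_def detects_def)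
    ultimately show "I \<in> (\<Union>w\<in>W. B w)" by blast
  qed
  have cB: "card (B w) \<le> (n - l) choose (d - l)" for w
  proof (cases "B w = {}")
    case True then show ?thesis by simp
  next
    case False
    then obtain I where "I \<in> B w" by blast
    then have L: "G S w \<subseteq> {1..n}" "card (G S w) = l" by (auto simp: B_def)
    have "B w \<subseteq> {I. I \<subseteq> {1..n} \<and> card I = d \<and> G S w \<subseteq> I}" by (auto simp: B_def)
    then have "card (B w) \<le> card {I. I \<subseteq> {1..n} \<and> card I = d \<and> G S w \<subseteq> I}"
      by (intro card_mono) (auto intro: finite_subset[of _ "Pow {1..n}"])
    also have "\<dots> \<le> (n - l) choose (d - l)" by (rule count_containing[OF L assms(2)])
    finally show ?thesis .
  qed
  have "card {I. I \<subseteq> {1..n} \<and> card I = d \<and> detects S l I} \<le> card (\<Union>w\<in>W. B w)"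
    using sub fW fB by (intro card_mono) auto
  also have "\<dots> \<le> (\<Sum>w\<in>W. card (B w))" by (rule card_UN_le[OF fW])
  also have "\<dots> \<le> (\<Sum>w\<in>W. (n - l) choose (d - l))" by (rule sum_mono) (rule cB)
  also have "\<dots> = 2^t * ((n - l) choose (d - l))" using cW by simp
  finally show ?thesis .
qed

lemma binom_ratio:
  "0 < d \<Longrightarrow> l \<le> d \<Longrightarrow> d \<le> n \<Longrightarrow>
    real ((n - l) choose (d - l)) * (real n / real d) ^ l \<le> real (n choose d)"
proof (induction l arbitrary: n d)
  case 0 then show ?case by simp
next
  case (Suc l)
  show ?case
  proof (cases "d = 1")
    case True
    then have "l = 0" using Suc by simp
    then show ?thesis using True by simp
  next
    case False
    then have d2: "d \<ge> 2" using Suc by simp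
    obtain n' d' where nd: "n = Suc n'" "d = Suc d'" using Suc d2
      by (metis Suc_le_D le_trans one_le_numeral)
    have IH: "real ((n' - l) choose (d' - l)) * (real n' / real d') ^ l \<le> real (n' choose d')"
      using Suc.IH[of d' n'] Suc.prems nd d2 by simp
    have rat: "real n / real d \<le> real n' / real d'"
      using nd d2 Suc.prems by (simp add: field_simps)
    have pw: "(real n / real d) ^ l \<le> (real n' / real d') ^ l"
      by (rule power_mono[OF rat]) simp
    have eq: "real (n choose d) = real n / real d * real (n' choose d')"
      using Suc_times_binomial[of d' n'] nd by (simp add: field_simps flip: of_nat_mult)
    have "real ((n - Suc l) choose (d - Suc l)) * (real n / real d) ^ Suc l
        = (real ((n' - l) choose (d' - l)) * (real n / real d) ^ l) * (real n / real d)"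
      using nd by simp
    also have "\<dots> \<le> (real ((n' - l) choose (d' - l)) * (real n' / real d') ^ l) * (real n / real d)"
      by (intro mult_right_mono mult_left_mono pw) auto
    also have "\<dots> \<le> real (n' choose d') * (real n / real d)"
      by (intro mult_right_mono IH) auto
    also have "\<dots> = real (n choose d)" using eq by simp
    finally show ?thesis .
  qed
qed


theorem theorem6:
  fixes n d l :: nat and M :: "'r measure" and A :: "'r \<Rightarrow> strategy"
  assumes "prob_space M"
    and "l \<le> d" and "2 * d \<le> n"
    and success: "\<And>I. I \<subseteq> {1..n} \<Longrightarrow> card I \<ge> l \<Longrightarrow>
                    measure M {r \<in> space M. detects (A r) l I} \<ge> 2/3"
  shows "\<exists>I r. I \<subseteq> {1..n} \<and> card I = d \<and> r \<in> space M \<and>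
            makes_at_least (A r) I (real l * log 2 (real n / real d) - 1)"
proof (rule ccontr)
  assume C: "\<not> ?thesis"
  interpret P: prob_space M by fact
  define q where "q = real l * log 2 (real n / real d) - 1"
  define Ds where "Ds = {I. I \<subseteq> {1..n} \<and> card I = d}"
  have I0: "{1..d} \<in> Ds" using assms(3) by (auto simp: Ds_def)
  obtain r0 where r0: "r0 \<in> space M" using P.not_empty by blast
  have HC: "halts (A r) I \<and> real (num_tests (A r) I) < q" if "I \<in> Ds" "r \<in> space M" for I r
  proof -
    have "I \<subseteq> {1..n}" "card I = d" using that by (auto simp: Ds_def)
    then have "\<not> makes_at_least (A r) I q" using C that(2) unfolding q_def by blast
    then show ?thesis unfolding makes_at_least_def by linarith
  qed
  have q0: "q > 0" using HC[OF I0 r0] by linarith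
  define t where "t = nat \<lceil>q\<rceil> - 1"
  have tq: "real t < q" using q0 unfolding t_def by linarith
  have nt: "num_tests (A r) I \<le> t" if "I \<in> Ds" "r \<in> space M" for I r
  proof -
    have "real (num_tests (A r) I) < q" using HC[OF that] by simp
    then have "real (num_tests (A r) I) < \<lceil>q\<rceil>" by linarith
    then show ?thesis unfolding t_def by linarith
  qed
  have l1: "l \<ge> 1"
  proof (rule ccontr)
    assume "\<not> l \<ge> 1" then have "l = 0" by simp
    then have "q = -1" by (simp add: q_def)
    then show False using q0 by simp
  qed
  have d1: "d \<ge> 1" using l1 assms(2) by simp
  define N where "N = n choose d"
  define K where "K = (n - l) choose (d - l)"
  have fDs: "finite Ds" by (rule finite_subset[of _ "Pow {1..n}"]) (auto simp: Ds_def)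
  have cDs: "card Ds = N" unfolding Ds_def N_def using n_subsets[of "{1..n}" d] by simp
  have Npos: "N > 0" unfolding N_def using assms(3) by simp
  have ratio: "real K * (real n / real d) ^ l \<le> real N"
    unfolding K_def N_def using binom_ratio[of d l n] d1 assms by simp
  have nd: "real n / real d > 0" using d1 assms(3) by simp
  have "2 powr real t < 2 powr q" using tq by simp
  also have "q = log 2 ((real n / real d) ^ l) - 1" unfolding q_def using nd by (simp add: log_nat_power)
  also have "2 powr (log 2 ((real n / real d) ^ l) - 1) = (real n / real d) ^ l / 2"
    using nd by (simp add: powr_diff)
  finally have tb: "2 ^ t < (real n / real d) ^ l / 2" by (simp add: powr_realpow)
  have pw: "real (card {I \<in> Ds. detects (A r) l I}) \<le> real N / 2" if r: "r \<in> space M" for r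
  proof -
    have H: "halts (A r) I \<and> num_tests (A r) I \<le> t" if "I \<subseteq> {1..n}" "card I = d" for I
    proof -
      have "I \<in> Ds" using that by (simp add: Ds_def)
      then show ?thesis using HC[OF _ r] nt[OF _ r] by blast
    qed
    have "card {I. I \<subseteq> {1..n} \<and> card I = d \<and> detects (A r) l I} \<le> 2^t * K"
      unfolding K_def by (rule count_bound[OF H assms(2)])
    moreover have "{I \<in> Ds. detects (A r) l I} = {I. I \<subseteq> {1..n} \<and> card I = d \<and> detects (A r) l I}"
      by (auto simp: Ds_def)
    ultimately have "card {I \<in> Ds. detects (A r) l I} \<le> 2^t * K" by simp
    then have "real (card {I \<in> Ds. detects (A r) l I}) \<le> real (2^t * K)" by (rule of_nat_mono)
    then have "real (card {I \<in> Ds. detects (A r) l I}) \<le> 2^t * real K" by simp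
    also have "\<dots> \<le> (real n / real d) ^ l / 2 * real K" using tb by (intro mult_right_mono) auto
    also have "\<dots> \<le> real N / 2" using ratio by (simp add: mult.commute)
    finally show ?thesis .
  qed
  define E where "E I = {r \<in> space M. detects (A r) l I}" for I
  have Em: "E I \<in> sets M" if "I \<in> Ds" for I
  proof (rule ccontr)
    assume "E I \<notin> sets M"
    then have "measure M (E I) = 0" by (rule measure_notin_sets)
    moreover have "measure M (E I) \<ge> 2/3" unfolding E_def
      using success that assms(2) by (auto simp: Ds_def)
    ultimately show False by simp
  qed
  have int: "integrable M (indicator (E I) :: 'r \<Rightarrow> real)" if "I \<in> Ds" for I
  proof (rule integrable_real_indicator[OF Em[OF that]])
    show "emeasure M (E I) < \<infinity>" using P.emeasure_finite[of "E I"] by (simp add: less_top[symmetric])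
  qed
  have "real N * (2/3) = (\<Sum>I\<in>Ds. 2/3)" using cDs by simp
  also have "\<dots> \<le> (\<Sum>I\<in>Ds. measure M (E I))"
    by (rule sum_mono) (use success assms(2) in \<open>auto simp: Ds_def E_def\<close>)
  also have "\<dots> = (\<Sum>I\<in>Ds. integral\<^sup>L M (indicator (E I)))"
    using Em by (intro sum.cong) (auto simp: P.emeasure_finite)
  also have "\<dots> = integral\<^sup>L M (\<lambda>r. \<Sum>I\<in>Ds. indicator (E I) r)"
    using Bochner_Integration.integral_sum[where I=Ds and M=M and f="\<lambda>I. indicator (E I)", OF int] by simp
  also have "\<dots> \<le> real N / 2"
  proof (rule P.integral_le_const)
    show "integrable M (\<lambda>r. \<Sum>I\<in>Ds. indicator (E I) r :: real)" using int by auto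
    show "AE r in M. (\<Sum>I\<in>Ds. indicator (E I) r :: real) \<le> real N / 2"
    proof (rule AE_I2)
      fix r assume r: "r \<in> space M"
      have "(\<Sum>I\<in>Ds. indicator (E I) r :: real) = (\<Sum>I\<in>Ds. if detects (A r) l I then 1 else 0)"
        using r by (intro sum.cong) (auto simp: E_def indicator_def)
      also have "\<dots> = real (card {I \<in> Ds. detects (A r) l I})"
        using fDs by (simp add: sum.If_cases Int_def)
      also have "\<dots> \<le> real N / 2" by (rule pw[OF r])
      finally show "(\<Sum>I\<in>Ds. indicator (E I) r :: real) \<le> real N / 2" .
    qed
  qed
  finally show False using Npos by simp
qed

end
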